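(* Let $P\in N_1$ be a sum of $8$ monomials, not necessarily distinct (i.e. $P(1)=8$). Then $P$ has unique factorisation inside $N_1$: any two factorisations of $P$ into irreducible elements of $N_1$ coincide up to the order of the factors.
   Context: $N_1=\mathbb{Z}_{\ge0}[X]$ is the semiring of univariate polynomials with nonnegative integer coefficients. An element $Q\neq0,1$ of $N_1$ is irreducible if in every factorisation $Q=ST$ with $S,T\in N_1$ one of $S,T$ is $1$. *)

theory Defs
  imports "HOL-Computational_Algebra.Polynomial" "HOL-Library.Multiset"
begin

text \<open>N_1 = Z_{>=0}[X] is modelled by the type nat poly.\<close>

definition N1_irreducible :: "nat poly \<Rightarrow> bool" where
  "N1_irreducible Q \<longleftrightarrow> Q \<noteq> 0 \<and> Q \<noteq> 1 \<and> (\<forall>S T. Q = S * T \<longrightarrow> S = 1 \<or> T = 1)"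

definition N1_unique_factorisation :: "nat poly \<Rightarrow> bool" where
  "N1_unique_factorisation P \<longleftrightarrow>
     (\<forall>A B. (\<forall>x\<in>#A. N1_irreducible x) \<longrightarrow> (\<forall>x\<in>#B. N1_irreducible x) \<longrightarrow>
            prod_mset A = P \<longrightarrow> prod_mset B = P \<longrightarrow> A = B)"

end

theory Submission
  imports Defs
begin

definition spm :: "nat multiset \<Rightarrow> nat poly" where
  "spm M = (\<Sum>x\<in>#M. monom 1 x)"

lemma spm_empty[simp]: "spm {#} = 0" by (simp add: spm_def)
lemma spm_add_mset[simp]: "spm (add_mset x M) = monom 1 x + spm M" by (simp add: spm_def)
lemma spm_union[simp]: "spm (M + N) = spm M + spm N" by (simp add: spm_def)

lemma coeff_spm: "coeff (spm M) k = count M k"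
  by (induction M) (auto simp: coeff_monom)

lemma spm_inj: "spm M = spm N \<longleftrightarrow> M = N"
  by (metis coeff_spm multiset_eqI poly_eqI)

lemma poly_spm1: "poly (spm M) 1 = size M"
  by (induction M) (auto simp: poly_monom)

lemma poly_spm1': "poly (spm M) (Suc 0) = size M"
  using poly_spm1 by simp

lemma monom_mult_spm: "monom 1 a * spm M = spm (image_mset ((+) a) M)"
  by (induction M) (auto simp: distrib_left mult_monom)

lemma monom_mult_spm': "monom (Suc 0) a * spm M = spm (image_mset ((+) a) M)"
  using monom_mult_spm by simp

lemma spm_mult: "spm M * spm N = spm (\<Sum>x\<in>#M. image_mset ((+) x) N)"
  by (induction M) (auto simp: distrib_right monom_mult_spm monom_mult_spm')

lemma image_add0[simp]: "image_mset ((+) (0::nat)) M = M" by (induction M) auto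

lemma spm_T_mult: "spm {#0,u#} * spm M = spm (M + image_mset ((+) u) M)"
  by (simp add: spm_mult del: spm_add_mset)

lemma spm_one: "spm {#0#} = 1" by (simp add: monom_0 one_pCons)

lemma coeff_le_poly1: "coeff (Q::nat poly) k \<le> poly Q 1"
proof (cases "k \<le> degree Q")
  case True
  have "coeff Q k \<le> (\<Sum>i\<le>degree Q. coeff Q i)"
    using True by (intro member_le_sum) auto
  then show ?thesis by (simp add: poly_altdef)
next
  case False then show ?thesis by (simp add: coeff_eq_0)
qed

lemma exists_spm: "\<exists>M. Q = spm M \<and> size M = poly Q 1"
proof (induction "poly Q 1" arbitrary: Q)
  case 0
  then have "Q = 0" using coeff_le_poly1[of Q] by (metis le_zero_eq poly_eqI coeff_0)
  then show ?case using 0 by (intro exI[of _ "{#}"]) simp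
next
  case (Suc n)
  then have "Q \<noteq> 0" by auto
  define k where "k = degree Q"
  have "lead_coeff Q \<noteq> 0" using \<open>Q \<noteq> 0\<close> by simp
  then have ck: "coeff Q k \<ge> 1" unfolding k_def by linarith
  define Q' where "Q' = Q - monom 1 k"
  have QQ: "Q = monom 1 k + Q'"
    by (rule poly_eqI) (use ck in \<open>auto simp: Q'_def coeff_monom\<close>)
  then have "poly Q' 1 = n" using Suc(2) by (simp add: poly_monom)
  then obtain M where "Q' = spm M" "size M = poly Q' 1" using Suc(1) by metis
  then show ?case using QQ \<open>poly Q' 1 = n\<close> Suc(2) by (intro exI[of _ "add_mset k M"]) simp
qed


definition D :: "nat \<Rightarrow> nat multiset \<Rightarrow> nat multiset" where
  "D u M = M + image_mset ((+) u) M"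

lemma pair_eq: "{#x,y#} = {#u,v#} \<longleftrightarrow> (x = u \<and> y = v) \<or> (x = v \<and> y = (u::'a))"
  by (auto simp: add_eq_conv_diff)

lemma D_eq_Min: "M = N \<Longrightarrow> Min_mset M = Min_mset N" by simp
lemma D_eq_sum: "M = N \<Longrightarrow> sum_mset M = sum_mset N" by simp

lemma caseA_ii:
  fixes a c p q r p' q' r' :: nat
  assumes E: "D a {#0,p,q,r#} = D c {#0,p',q',r'#}"
    and s: "p \<le> q" "q \<le> r" "p' \<le> q'" "q' \<le> r'" and irr: "r \<noteq> p+q" "r' \<noteq> p'+q'"
    and pa: "p < a" and ac: "a < c"
  shows False
proof -
  have E0: "{#0,p,q,r,a,a+p,a+q,a+r#} = {#0,p',q',r',c,c+p',c+q',c+r'#}"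
    using E by (simp add: D_def add_mset_commute)
  have "Min_mset {#p,q,r,a,a+p,a+q,a+r#} = Min_mset {#p',q',r',c,c+p',c+q',c+r'#}"
    using E0 by simp
  then have "min p a = min p' c" using s by (auto simp: min_def split: if_splits)
  then have pp: "p' = p" using pa ac by (auto simp: min_def split: if_splits)
  have E1: "{#q,r,a,a+p,a+q,a+r#} = {#q',r',c,c+p,c+q',c+r'#}"
    using E0 unfolding pp by simp
  have "Max_mset {#q,r,a,a+p,a+q,a+r#} = Max_mset {#q',r',c,c+p,c+q',c+r'#}"
    using E1 by simp
  then have top: "a + r = c + r'" using s pp by (auto simp: max_def split: if_splits)
  have "Min_mset {#q,r,a,a+p,a+q,a+r#} = Min_mset {#q',r',c,c+p,c+q',c+r'#}"
    using E1 by simp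
  then have m2: "min q a = min q' c" using s pp by (auto simp: min_def split: if_splits)
  have sm: "q + r + a + (a+p) + (a+q) + (a+r) = q' + r' + c + (c+p) + (c+q') + (c+r')"
    using arg_cong[OF E1, of sum_mset] by simp
  show False
  proof (cases "q \<le> a")
    case True
    then have "q' = q" using m2 ac by (auto simp: min_def split: if_splits)
    then show False using sm top ac by simp
  next
    case False
    then have qa: "q' = a" using m2 ac by (auto simp: min_def split: if_splits)
    then have qc: "q = c" using sm top by simp
    have "{#r, a+p#} = {#r', c+p#}"
      using E1 unfolding qa qc top by (simp add: add.commute add_mset_commute)
    then show False using top ac irr qc
      by (auto simp: pair_eq)
  qed
qed

lemma mu4:
  fixes a c p q r p' q' r' :: nat
  assumes E: "D a {#0,p,q,r#} = D c {#0,p',q',r'#}"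
    and s: "p \<le> q" "q \<le> r" "p' \<le> q'" "q' \<le> r'"
  shows "min p a = min p' c"
proof -
  have E0: "{#0,p,q,r,a,a+p,a+q,a+r#} = {#0,p',q',r',c,c+p',c+q',c+r'#}"
    using E by (simp add: D_def add_mset_commute)
  have "Min_mset {#p,q,r,a,a+p,a+q,a+r#} = Min_mset {#p',q',r',c,c+p',c+q',c+r'#}"
    using E0 by simp
  then show ?thesis using s by (auto simp: min_def split: if_splits)
qed

lemma top4:
  fixes a c p q r p' q' r' :: nat
  assumes E: "D a {#0,p,q,r#} = D c {#0,p',q',r'#}"
    and s: "p \<le> q" "q \<le> r" "p' \<le> q'" "q' \<le> r'"
  shows "a + r = c + r'"
proof -
  have "Max_mset (D a {#0,p,q,r#}) = Max_mset (D c {#0,p',q',r'#})"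
    using E by simp
  then show ?thesis using s by (auto simp: D_def max_def split: if_splits)
qed

lemma D_refl:
  assumes "\<forall>x\<in>#M. x \<le> t" "T = u + t"
  shows "image_mset (\<lambda>x. T - x) (D u M) = D u (image_mset (\<lambda>x. t - x) M)"
  using assms unfolding D_def
  by (induction M) (auto simp: add_mset_commute)

lemma refl4:
  fixes a c p q r p' q' r' :: nat
  assumes E: "D a {#0,p,q,r#} = D c {#0,p',q',r'#}"
    and s: "p \<le> q" "q \<le> r" "p' \<le> q'" "q' \<le> r'"
  shows "D a {#0,r-q,r-p,r#} = D c {#0,r'-q',r'-p',r'#}"
proof -
  have top: "a + r = c + r'" using top4[OF E s] .
  have "image_mset (\<lambda>x. (a + r) - x) (D a {#0,p,q,r#}) = image_mset (\<lambda>x. (a + r) - x) (D c {#0,p',q',r'#})"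
    using E by simp
  also have "image_mset (\<lambda>x. (a + r) - x) (D a {#0,p,q,r#}) = D a (image_mset (\<lambda>x. r - x) {#0,p,q,r#})"
    by (rule D_refl) (use s in auto)
  also have "image_mset (\<lambda>x. (a + r) - x) (D c {#0,p',q',r'#}) = D c (image_mset (\<lambda>x. r' - x) {#0,p',q',r'#})"
    by (rule D_refl) (use s top in auto)
  finally show ?thesis by (simp add: add_mset_commute)
qed

lemma caseA_lt:
  fixes a c p q r p' q' r' :: nat
  assumes E: "D a {#0,p,q,r#} = D c {#0,p',q',r'#}"
    and s: "p \<le> q" "q \<le> r" "p' \<le> q'" "q' \<le> r'" and irr: "r \<noteq> p+q" "r' \<noteq> p'+q'"
    and ac: "a < c"
  shows False
proof -
  have E': "D a {#0,r-q,r-p,r#} = D c {#0,r'-q',r'-p',r'#}" using refl4[OF E s] .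
  have s': "r - q \<le> r - p" "r - p \<le> r" "r' - q' \<le> r' - p'" "r' - p' \<le> r'" using s by auto
  have irr': "r \<noteq> (r-q)+(r-p)" "r' \<noteq> (r'-q')+(r'-p')" using s irr by auto
  have m1: "min p a = min p' c" using mu4[OF E s] .
  have m2: "min (r-q) a = min (r'-q') c" using mu4[OF E' s'] .
  show False
  proof (cases "p < a")
    case True show False by (rule caseA_ii[OF E s irr True ac])
  next
    case False
    show False
    proof (cases "r - q < a")
      case True show False by (rule caseA_ii[OF E' s' irr' True ac])
    next
      case False2: False
      have "p' = a" using m1 False ac by (auto simp: min_def split: if_splits)
      moreover have "r' - q' = a" using m2 False2 ac by (auto simp: min_def split: if_splits)
      ultimately show False using irr s by auto
    qed
  qed
qed

lemma D_Min: "M \<noteq> {#} \<Longrightarrow> Min_mset (D u M) = Min_mset M"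
  unfolding D_def
  by (rule Min_eqI) (auto intro: Min_le order.trans[OF Min_le] simp: Min_in)

lemma D_cancel: "D u M = D u N \<Longrightarrow> M = N"
proof (induction "size M" arbitrary: M N rule: less_induct)
  case less
  show ?case
  proof (cases "M = {#}")
    case True
    then show ?thesis using less.prems by (simp add: D_def)
  next
    case False
    then have "N \<noteq> {#}" using less.prems by (auto simp: D_def)
    define m where "m = Min_mset M"
    have "Min_mset N = m" using D_Min[OF False, of u] D_Min[OF \<open>N \<noteq> {#}\<close>, of u] less.prems m_def by simp
    then have mN: "m \<in># N" using \<open>N \<noteq> {#}\<close> by auto
    have mM: "m \<in># M" using False m_def by auto
    obtain M' where M': "M = add_mset m M'" using mM by (metis multi_member_split)
    obtain N' where N': "N = add_mset m N'" using mN by (metis multi_member_split)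
    have "D u M' = D u N'" using less.prems unfolding M' N' D_def by (simp add: add_mset_commute)
    then show ?thesis using less.hyps[of M' N'] M' N' by simp
  qed
qed

lemma caseA:
  fixes a c p q r p' q' r' :: nat
  assumes E: "D a {#0,p,q,r#} = D c {#0,p',q',r'#}"
    and s: "p \<le> q" "q \<le> r" "p' \<le> q'" "q' \<le> r'" and irr: "r \<noteq> p+q" "r' \<noteq> p'+q'"
  shows "a = c \<and> {#0,p,q,r#} = {#0,p',q',r'#}"
proof -
  have "a = c"
  proof (rule ccontr)
    assume "a \<noteq> c"
    then consider "a < c" | "c < a" by linarith
    then show False
    proof cases
      case 1 then show ?thesis using caseA_lt[OF E s irr] by blast
    next
      case 2 then show ?thesis using caseA_lt[OF E[symmetric] s(3,4,1,2) irr(2,1)] by blast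
    qed
  qed
  then show ?thesis using D_cancel E by blast
qed

lemma caseB:
  fixes a b c d p q r :: nat
  assumes E: "D a {#0,p,q,r#} = D b (D c {#0,d#})"
    and s: "p \<le> q" "q \<le> r" "b \<le> c" "c \<le> d" and irr: "r \<noteq> p+q"
  shows False
proof -
  have E0: "{#0,p,q,r,a,a+p,a+q,a+r#} = {#0,c,d,c+d,b,b+c,b+d,b+(c+d)#}"
    using E by (simp add: D_def add_mset_commute add.assoc)
  have "Min_mset {#p,q,r,a,a+p,a+q,a+r#} = Min_mset {#c,d,c+d,b,b+c,b+d,b+(c+d)#}"
    using E0 by simp
  then have m1: "min p a = b" using s by (auto simp: min_def split: if_splits)
  have "Max_mset {#0,p,q,r,a,a+p,a+q,a+r#} = Max_mset {#0,c,d,c+d,b,b+c,b+d,b+(c+d)#}"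
    using E0 by simp
  then have top: "a + r = b + (c + d)" using s by (auto simp: max_def split: if_splits)
  have "image_mset (\<lambda>x. (a + r) - x) (D a {#0,p,q,r#}) = image_mset (\<lambda>x. (a + r) - x) (D b (D c {#0,d#}))"
    using E by simp
  also have "image_mset (\<lambda>x. (a + r) - x) (D a {#0,p,q,r#}) = D a (image_mset (\<lambda>x. r - x) {#0,p,q,r#})"
    by (rule D_refl) (use s in auto)
  also have "image_mset (\<lambda>x. (a + r) - x) (D b (D c {#0,d#})) = D b (image_mset (\<lambda>x. (c+d) - x) (D c {#0,d#}))"
    by (rule D_refl) (use s top in \<open>auto simp: D_def\<close>)
  also have "image_mset (\<lambda>x. (c+d) - x) (D c {#0,d#}) = D c (image_mset (\<lambda>x. d - x) {#0,d#})"
    by (rule D_refl) auto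
  finally have E1: "D a {#0,r-q,r-p,r#} = D b (D c {#0,d#})" by (simp add: add_mset_commute)
  have E2: "{#0,r-q,r-p,r,a,a+(r-q),a+(r-p),a+r#} = {#0,c,d,c+d,b,b+c,b+d,b+(c+d)#}"
    using E1 by (simp add: D_def add_mset_commute add.assoc)
  have "Min_mset {#r-q,r-p,r,a,a+(r-q),a+(r-p),a+r#} = Min_mset {#c,d,c+d,b,b+c,b+d,b+(c+d)#}"
    using E2 by simp
  then have m2: "min (r-q) a = b" using s by (auto simp: min_def split: if_splits)
  show False
  proof (cases "a = b")
    case True
    then have "{#0,p,q,r#} = D c {#0,d#}" using E D_cancel by blast
    then have E3: "{#0,p,q,r#} = {#0,c,d,c+d#}" by (simp add: D_def add_mset_commute)
    have "Min_mset {#p,q,r#} = Min_mset {#c,d,c+d#}" using E3 by simp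
    then have "p = c" using s by (auto simp: min_def split: if_splits)
    then have "{#q,r#} = {#d,c+d#}" using E3 by simp
    then show False using s irr \<open>p = c\<close> by (auto simp: pair_eq)
  next
    case False
    then have "p = b" "r - q = b" using m1 m2 by (auto simp: min_def split: if_splits)
    then show False using irr s by auto
  qed
qed

lemma caseC:
  fixes a b c d e f :: nat
  assumes E: "D a (D b {#0,c#}) = D d (D e {#0,f#})"
    and s: "a \<le> b" "b \<le> c" "d \<le> e" "e \<le> f"
  shows "a = d \<and> b = e \<and> c = f"
proof -
  have E0: "{#0,c,b,b+c,a,a+c,a+b,a+(b+c)#} = {#0,f,e,e+f,d,d+f,d+e,d+(e+f)#}"
    using E by (simp add: D_def add_mset_commute add.assoc)
  have "Min_mset {#c,b,b+c,a,a+c,a+b,a+(b+c)#} = Min_mset {#f,e,e+f,d,d+f,d+e,d+(e+f)#}"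
    using E0 by simp
  then have ad: "a = d" using s by (auto simp: min_def split: if_splits)
  then have E1: "D b {#0,c#} = D e {#0,f#}" using E D_cancel by blast
  have E2: "{#0,c,b,b+c#} = {#0,f,e,e+f#}" using E1 by (simp add: D_def add_mset_commute)
  have "Min_mset {#c,b,b+c#} = Min_mset {#f,e,e+f#}" using E2 by simp
  then have be: "b = e" using s by (auto simp: min_def split: if_splits)
  then have "{#0,c#} = {#0,f#}" using E1 D_cancel by blast
  then show ?thesis using ad be by simp
qed


lemma spm_D: "spm {#0,u#} * spm M = spm (D u M)"
  unfolding D_def by (rule spm_T_mult)

lemma spm_X_mult: "spm {#1#} * spm M = spm (image_mset ((+) 1) M)"
  by (subst spm_mult) simp

lemma spm_single_ne1: "spm {#Suc k#} \<noteq> 1"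
  by (metis spm_inj spm_one single_eq_single nat.distinct(1))

lemma spm_T_ne1: "spm {#0,u#} \<noteq> 1"
proof
  assume "spm {#0,u#} = 1"
  then have "{#0,u#} = {#0#}" using spm_one spm_inj by metis
  then show False by simp
qed

lemma irr_shape:
  assumes irr: "N1_irreducible Q"
  obtains M where "Q = spm M" "M = {#1#} \<or> (0 \<in># M \<and> 2 \<le> size M)"
proof -
  obtain M where QM: "Q = spm M" using exists_spm by blast
  have Q0: "Q \<noteq> 0" "Q \<noteq> 1" using irr by (auto simp: N1_irreducible_def)
  then have "M \<noteq> {#}" using QM by auto
  show ?thesis
  proof (cases "0 \<in># M")
    case True
    have "size M \<noteq> 1"
    proof
      assume "size M = 1"
      then obtain x where "M = {#x#}" using size_1_singleton_mset by blast
      then have "M = {#0#}" using True by simp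
      then show False using Q0 QM spm_one by simp
    qed
    moreover have "size M \<noteq> 0" using \<open>M \<noteq> {#}\<close> by simp
    ultimately have "2 \<le> size M" by linarith
    then show ?thesis using that QM True by blast
  next
    case False
    define M' where "M' = image_mset (\<lambda>x. x - 1) M"
    have MM: "image_mset ((+) 1) M' = M"
      unfolding M'_def image_mset.compositionality using False
      by (induction M) auto
    have "Q = spm {#1#} * spm M'" using QM MM spm_X_mult by simp
    then have "spm M' = 1" using irr spm_single_ne1[of 0] by (auto simp: N1_irreducible_def)
    then have "M' = {#0#}" using spm_one spm_inj by metis
    then have "M = {#1#}" using MM by auto
    then show ?thesis using that QM by blast
  qed
qed

lemma size2_shape:
  assumes "0 \<in># M" "size M = 2"
  obtains u where "M = {#0,u#}"
proof -
  obtain M0 where M0: "M = add_mset 0 M0" using assms(1) by (metis multi_member_split)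
  then have "size M0 = 1" using assms by simp
  then obtain u where "M0 = {#u#}" using size_1_singleton_mset by blast
  then show ?thesis using that M0 by blast
qed

lemma len3: "length xs = 3 \<Longrightarrow> \<exists>a b c. xs = [a,b,c]"
  by (auto simp: numeral_3_eq_3 length_Suc_conv)

lemma size3: "size M = 3 \<Longrightarrow> \<exists>a b c. M = {#a,b,c#}"
proof -
  assume "size M = 3"
  then have s3: "size M = Suc (Suc (Suc 0))" by simp
  then obtain a M1 where 1: "M = add_mset a M1" using size_eq_Suc_imp_eq_union by blast
  then have s2: "size M1 = Suc (Suc 0)" using s3 by simp
  then obtain b M2 where 2: "M1 = add_mset b M2" using size_eq_Suc_imp_eq_union by blast
  then have "size M2 = Suc 0" using s2 by simp
  then obtain c where "M2 = {#c#}" using size_1_singleton_mset by auto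
  then show ?thesis using 1 2 by blast
qed

lemma sort3:
  obtains p q r :: nat where "p \<le> q" "q \<le> r" "{#x,y,z#} = {#p,q,r#}"
proof -
  have "length (sort [x,y,z]) = 3" by simp
  then obtain p q r where pqr: "sort [x,y,z] = [p,q,r]"
    using len3 by blast
  have "sorted [p,q,r]" by (metis pqr sorted_sort)
  moreover have "mset [p,q,r] = mset [x,y,z]" by (metis pqr mset_sort)
  ultimately have "p \<le> q" "q \<le> r" "{#x,y,z#} = {#p,q,r#}" by simp_all
  then show ?thesis by (rule that)
qed

lemma size4_shape:
  assumes irr: "N1_irreducible (spm M)" and "0 \<in># M" "size M = 4"
  obtains p q r where "p \<le> q" "q \<le> r" "r \<noteq> p + q" "M = {#0,p,q,r#}"
proof -
  obtain M0 where M0: "M = add_mset 0 M0" using assms(2) by (metis multi_member_split)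
  then have "size M0 = 3" using assms by simp
  then obtain x y z where "M0 = {#x,y,z#}" using size3 by blast
  then obtain p q r where pqr: "p \<le> q" "q \<le> r" "M = {#0,p,q,r#}"
    using sort3[of x y z] M0 by metis
  have "r \<noteq> p + q"
  proof
    assume "r = p + q"
    have "D p {#0,q#} = M" using pqr(3) \<open>r = p + q\<close> by (simp add: D_def add_mset_commute)
    then have "spm M = spm {#0,p#} * spm {#0,q#}" using spm_D by metis
    then show False using irr spm_T_ne1 by (auto simp: N1_irreducible_def)
  qed
  then show ?thesis using that pqr by blast
qed


lemma poly_prod_mset': "poly (prod_mset A) y = prod_mset (image_mset (\<lambda>x. poly x y) A)"
  by (induction A) auto

lemma irr_good:
  assumes "N1_irreducible x" "x \<noteq> spm {#1#}"
  obtains M where "x = spm M" "0 \<in># M" "2 \<le> size M"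
  using irr_shape[OF assms(1)] assms(2) by metis

lemma irr_val:
  assumes "N1_irreducible x"
  shows "poly x 1 \<ge> 1"
proof -
  obtain M where "x = spm M" "M = {#1#} \<or> (0 \<in># M \<and> 2 \<le> size M)" using irr_shape[OF assms] by metis
  then show ?thesis by (auto simp: poly_spm1 poly_spm1' poly_monom)
qed

lemma prod_not1:
  assumes "B \<noteq> {#}" "\<forall>x\<in>#B. N1_irreducible x"
  shows "prod_mset B \<noteq> 1"
proof
  assume P1: "prod_mset B = 1"
  obtain x B' where B: "B = add_mset x B'" using assms(1) by (metis multiset_cases)
  have ix: "N1_irreducible x" using assms B by simp
  have "poly (prod_mset B) 1 = 1" using P1 by simp
  then have "poly x 1 * poly (prod_mset B') 1 = 1" using B by simp
  then have v1: "poly x 1 = 1" by simp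
  obtain M where xM: "x = spm M" "M = {#1#} \<or> (0 \<in># M \<and> 2 \<le> size M)" using irr_shape[OF ix] by metis
  then have "M = {#1#}" using v1 by (auto simp: poly_spm1 poly_spm1')
  then have "poly x 0 = 0" using xM by (simp add: poly_monom)
  then have "poly (prod_mset B) 0 = 0" using B by simp
  then show False using P1 by simp
qed

lemma single_irr:
  assumes "N1_irreducible Q" "\<forall>x\<in>#B. N1_irreducible x" "prod_mset B = Q"
  shows "B = {#Q#}"
proof -
  have "B \<noteq> {#}" using assms by (auto simp: N1_irreducible_def)
  then obtain x B' where B: "B = add_mset x B'" by (metis multiset_cases)
  then have "Q = x * prod_mset B'" using assms(3) by simp
  moreover have "x \<noteq> 1" using assms(2) B by (auto simp: N1_irreducible_def)
  ultimately have "prod_mset B' = 1" using assms(1) by (auto simp: N1_irreducible_def)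
  then have "B' = {#}" using prod_not1[of B'] assms(2) B by auto
  then show ?thesis using B assms(3) by simp
qed

lemma two_fac: "(x::nat) * y = 8 \<Longrightarrow> 2 \<le> x \<Longrightarrow> 2 \<le> y \<Longrightarrow> (x = 2 \<and> y = 4) \<or> (x = 4 \<and> y = 2)"
proof -
  assume h: "x * y = 8" "2 \<le> x" "2 \<le> y"
  have "x * 2 \<le> 8" using h mult_le_mono2[of 2 y x] by simp
  then have "x \<le> 4" by simp
  then have "x = 2 \<or> x = 3 \<or> x = 4" using h by auto
  then show ?thesis using h by (auto; presburger)
qed

lemma three_fac: "(x::nat) * (y * z) = 8 \<Longrightarrow> 2 \<le> x \<Longrightarrow> 2 \<le> y \<Longrightarrow> 2 \<le> z \<Longrightarrow> x = 2 \<and> y = 2 \<and> z = 2"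
proof -
  assume h: "x * (y * z) = 8" "2 \<le> x" "2 \<le> y" "2 \<le> z"
  have "2 * 2 \<le> y * z" using mult_le_mono[of 2 y 2 z] h by simp
  then have "x * 4 \<le> x * (y * z)" by simp
  then have "x \<le> 2" using h by linarith
  then have x2: "x = 2" using h by simp
  then have yz: "y * z = 4" using h by simp
  have "y * 2 \<le> y * z" using h by simp
  then have "y \<le> 2" using yz by linarith
  then have "y = 2" using h by simp
  then show ?thesis using x2 yz by simp
qed

lemma four_fac: "(x::nat) * (y * (z * (w * v))) \<noteq> 8" if "2 \<le> x" "2 \<le> y" "2 \<le> z" "2 \<le> w"
proof (cases "v = 0")
  case True then show ?thesis by simp
next
  case False
  have "2 * (2 * (2 * (2 * 1))) \<le> x * (y * (z * (w * v)))"
    using that False by (intro mult_mono) auto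
  then show ?thesis by auto
qed


lemma shape8:
  assumes A: "\<forall>x\<in>#A. N1_irreducible x \<and> x \<noteq> spm {#1#}" and v: "poly (prod_mset A) 1 = 8"
  shows "(\<exists>Q. A = {#Q#}) \<or>
    (\<exists>a p q r. p \<le> q \<and> q \<le> r \<and> r \<noteq> p+q \<and> A = {#spm {#0,a#}, spm {#0,p,q,r#}#}) \<or>
    (\<exists>a b c. a \<le> b \<and> b \<le> c \<and> A = {#spm {#0,a#}, spm {#0,b#}, spm {#0,c#}#})"
proof -
  have v2: "2 \<le> poly x 1" if "x \<in># A" for x
  proof -
    have "N1_irreducible x" "x \<noteq> spm {#1#}" using A that by auto
    then obtain M where "x = spm M" "0 \<in># M" "2 \<le> size M" by (rule irr_good)
    then show ?thesis by (simp add: poly_spm1 poly_spm1')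
  qed
  have c2: "\<exists>u. x = spm {#0,u#}" if "x \<in># A" "poly x 1 = 2" for x
  proof -
    have "N1_irreducible x" "x \<noteq> spm {#1#}" using A that(1) by auto
    then obtain M where M: "x = spm M" "0 \<in># M" "2 \<le> size M" by (rule irr_good)
    then have "size M = 2" using that(2) by (simp add: poly_spm1 poly_spm1')
    then obtain u where "M = {#0,u#}" using size2_shape[OF M(2)] by blast
    then show ?thesis using M by blast
  qed
  have c4: "\<exists>p q r. p \<le> q \<and> q \<le> r \<and> r \<noteq> p+q \<and> x = spm {#0,p,q,r#}" if "x \<in># A" "poly x 1 = 4" for x
  proof -
    have "N1_irreducible x" "x \<noteq> spm {#1#}" using A that(1) by auto
    then obtain M where M: "x = spm M" "0 \<in># M" "2 \<le> size M" by (rule irr_good)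
    then have "size M = 4" using that(2) by (simp add: poly_spm1 poly_spm1')
    moreover have "N1_irreducible (spm M)" using A that(1) M by simp
    ultimately obtain p q r where "p \<le> q" "q \<le> r" "r \<noteq> p + q" "M = {#0,p,q,r#}"
      using size4_shape[OF _ M(2)] by blast
    then show ?thesis using M by blast
  qed
  show ?thesis
  proof (cases A)
    case empty then show ?thesis using v by simp
  next
    case (add x A1)
    show ?thesis
    proof (cases A1)
      case empty then show ?thesis using add by simp
    next
      case (add y A2)
      note A1 = add
      show ?thesis
      proof (cases A2)
        case empty
        have "poly x 1 * poly y 1 = 8" using v \<open>A = add_mset x A1\<close> A1 empty by simp
        moreover have "2 \<le> poly x 1" "2 \<le> poly y 1" using v2 \<open>A = add_mset x A1\<close> A1 by auto
        ultimately have "(poly x 1 = 2 \<and> poly y 1 = 4) \<or> (poly x 1 = 4 \<and> poly y 1 = 2)"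
          using two_fac by blast
        then show ?thesis
        proof
          assume h: "poly x 1 = 2 \<and> poly y 1 = 4"
          obtain u where "x = spm {#0,u#}" using c2 h \<open>A = add_mset x A1\<close> by auto
          moreover obtain p q r where "p \<le> q \<and> q \<le> r \<and> r \<noteq> p+q \<and> y = spm {#0,p,q,r#}"
            using c4 h \<open>A = add_mset x A1\<close> A1 by fastforce
          ultimately show ?thesis using \<open>A = add_mset x A1\<close> A1 empty by blast
        next
          assume h: "poly x 1 = 4 \<and> poly y 1 = 2"
          obtain u where "y = spm {#0,u#}" using c2 h \<open>A = add_mset x A1\<close> A1 by auto
          moreover obtain p q r where "p \<le> q \<and> q \<le> r \<and> r \<noteq> p+q \<and> x = spm {#0,p,q,r#}"
            using c4 h \<open>A = add_mset x A1\<close> by fastforce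
          ultimately have "A = {#spm {#0,u#}, spm {#0,p,q,r#}#} \<and> p \<le> q \<and> q \<le> r \<and> r \<noteq> p+q"
            using \<open>A = add_mset x A1\<close> A1 empty by (auto simp: add_mset_commute)
          then show ?thesis by blast
        qed
      next
        case (add z A3)
        note A2 = add
        show ?thesis
        proof (cases A3)
          case empty
          have "poly x 1 * (poly y 1 * poly z 1) = 8" using v \<open>A = add_mset x A1\<close> A1 A2 empty by simp
          moreover have "2 \<le> poly x 1" "2 \<le> poly y 1" "2 \<le> poly z 1"
            using v2 \<open>A = add_mset x A1\<close> A1 A2 by auto
          ultimately have h: "poly x 1 = 2" "poly y 1 = 2" "poly z 1 = 2" using three_fac by blast+
          obtain a where "x = spm {#0,a#}" using c2 h \<open>A = add_mset x A1\<close> by auto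
          moreover obtain b where "y = spm {#0,b#}" using c2 h \<open>A = add_mset x A1\<close> A1 by auto
          moreover obtain c where "z = spm {#0,c#}" using c2 h \<open>A = add_mset x A1\<close> A1 A2 by auto
          ultimately have AT: "A = image_mset (\<lambda>u. spm {#0,u#}) {#a,b,c#}"
            using \<open>A = add_mset x A1\<close> A1 A2 empty by simp
          obtain a' b' c' where o: "a' \<le> b'" "b' \<le> c'" "{#a,b,c#} = {#a',b',c'#}" using sort3[of a b c] by blast
          then have "A = {#spm {#0,a'#}, spm {#0,b'#}, spm {#0,c'#}#}" using AT by (simp del: spm_add_mset)
          then show ?thesis using o by blast
        next
          case (add w A4)
          have "poly x 1 * (poly y 1 * (poly z 1 * (poly w 1 * poly (prod_mset A4) 1))) = 8"
            using v \<open>A = add_mset x A1\<close> A1 A2 add by simp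
          moreover have "2 \<le> poly x 1" "2 \<le> poly y 1" "2 \<le> poly z 1" "2 \<le> poly w 1"
            using v2 \<open>A = add_mset x A1\<close> A1 A2 add by auto
          ultimately show ?thesis using four_fac[of "poly x 1" "poly y 1" "poly z 1" "poly w 1"] by simp
        qed
      qed
    qed
  qed
qed


lemma prod2: "prod_mset {#spm {#0,a#}, spm L#} = spm (D a L)"
  using spm_D[of a L] by (simp del: spm_add_mset)

lemma prod3: "prod_mset {#spm {#0,a#}, spm {#0,b#}, spm {#0,c#}#} = spm (D a (D b {#0,c#}))"
  using spm_D[of a "D b {#0,c#}"] spm_D[of b "{#0,c#}"] by (simp del: spm_add_mset add: mult.assoc)

lemma core:
  assumes A: "\<forall>x\<in>#A. N1_irreducible x \<and> x \<noteq> spm {#1#}"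
    and B: "\<forall>x\<in>#B. N1_irreducible x \<and> x \<noteq> spm {#1#}"
    and eq: "prod_mset A = prod_mset B" and v: "poly (prod_mset A) 1 = 8"
  shows "A = B"
proof -
  have vB: "poly (prod_mset B) 1 = 8" using v eq by simp
  note sA = shape8[OF A v] and sB = shape8[OF B vB]
  show ?thesis
  proof (cases "\<exists>Q. A = {#Q#}")
    case True
    then obtain Q where AQ: "A = {#Q#}" by blast
    then have "N1_irreducible Q" using A by simp
    moreover have "prod_mset B = Q" using eq AQ by simp
    moreover have "\<forall>x\<in>#B. N1_irreducible x" using B by simp
    ultimately have "B = {#Q#}" using single_irr by blast
    then show ?thesis using AQ by simp
  next
    case nA: False
    show ?thesis
    proof (cases "\<exists>Q. B = {#Q#}")
      case True
      then obtain Q where BQ: "B = {#Q#}" by blast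
      then have "N1_irreducible Q" using B by simp
      moreover have "prod_mset A = Q" using eq BQ by simp
      moreover have "\<forall>x\<in>#A. N1_irreducible x" using A by simp
      ultimately have "A = {#Q#}" using single_irr by blast
      then show ?thesis using BQ by simp
    next
      case nB: False
      have sA': "(\<exists>a p q r. p \<le> q \<and> q \<le> r \<and> r \<noteq> p+q \<and> A = {#spm {#0,a#}, spm {#0,p,q,r#}#}) \<or>
         (\<exists>a b c. a \<le> b \<and> b \<le> c \<and> A = {#spm {#0,a#}, spm {#0,b#}, spm {#0,c#}#})" using sA nA by blast
      have sB': "(\<exists>a p q r. p \<le> q \<and> q \<le> r \<and> r \<noteq> p+q \<and> B = {#spm {#0,a#}, spm {#0,p,q,r#}#}) \<or>
         (\<exists>a b c. a \<le> b \<and> b \<le> c \<and> B = {#spm {#0,a#}, spm {#0,b#}, spm {#0,c#}#})" using sB nB by blast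
      show ?thesis
      proof (cases "\<exists>a p q r. p \<le> q \<and> q \<le> r \<and> r \<noteq> p+q \<and> A = {#spm {#0,a#}, spm {#0,p,q,r#}#}")
        case True
        then obtain a p q r where a: "p \<le> q" "q \<le> r" "r \<noteq> p+q" "A = {#spm {#0,a#}, spm {#0,p,q,r#}#}" by blast
        have PA: "prod_mset A = spm (D a {#0,p,q,r#})" unfolding a(4) by (rule prod2)
        show ?thesis
        proof (cases "\<exists>a p q r. p \<le> q \<and> q \<le> r \<and> r \<noteq> p+q \<and> B = {#spm {#0,a#}, spm {#0,p,q,r#}#}")
          case True
          then obtain c p' q' r' where b: "p' \<le> q'" "q' \<le> r'" "r' \<noteq> p'+q'" "B = {#spm {#0,c#}, spm {#0,p',q',r'#}#}" by blast
          have "prod_mset B = spm (D c {#0,p',q',r'#})" unfolding b(4) by (rule prod2)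
          then have "D a {#0,p,q,r#} = D c {#0,p',q',r'#}" using PA eq spm_inj by metis
          then have "a = c \<and> {#0,p,q,r#} = {#0,p',q',r'#}" using caseA a(1-3) b(1-3) by blast
          then show ?thesis using a(4) b(4) by simp
        next
          case False
          then obtain b c d where b: "b \<le> c" "c \<le> d" "B = {#spm {#0,b#}, spm {#0,c#}, spm {#0,d#}#}" using sB' by blast
          have "prod_mset B = spm (D b (D c {#0,d#}))" unfolding b(3) by (rule prod3)
          then have "D a {#0,p,q,r#} = D b (D c {#0,d#})" using PA eq spm_inj by metis
          then show ?thesis using caseB a(1-3) b(1,2) by blast
        qed
      next
        case False
        then obtain a b c where a: "a \<le> b" "b \<le> c" "A = {#spm {#0,a#}, spm {#0,b#}, spm {#0,c#}#}" using sA' by blast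
        have PA: "prod_mset A = spm (D a (D b {#0,c#}))" unfolding a(3) by (rule prod3)
        show ?thesis
        proof (cases "\<exists>a p q r. p \<le> q \<and> q \<le> r \<and> r \<noteq> p+q \<and> B = {#spm {#0,a#}, spm {#0,p,q,r#}#}")
          case True
          then obtain e p q r where b: "p \<le> q" "q \<le> r" "r \<noteq> p+q" "B = {#spm {#0,e#}, spm {#0,p,q,r#}#}" by blast
          have "prod_mset B = spm (D e {#0,p,q,r#})" unfolding b(4) by (rule prod2)
          then have "D e {#0,p,q,r#} = D a (D b {#0,c#})" using PA eq spm_inj by metis
          then show ?thesis using caseB b(1-3) a(1,2) by blast
        next
          case False
          then obtain d e f where b: "d \<le> e" "e \<le> f" "B = {#spm {#0,d#}, spm {#0,e#}, spm {#0,f#}#}" using sB' by blast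
          have "prod_mset B = spm (D d (D e {#0,f#}))" unfolding b(3) by (rule prod3)
          then have "D a (D b {#0,c#}) = D d (D e {#0,f#})" using PA eq spm_inj by metis
          then have "a = d \<and> b = e \<and> c = f" using caseC a(1,2) b(1,2) by blast
          then show ?thesis using a(3) b(3) by simp
        qed
      qed
    qed
  qed
qed


lemma image_shift_Suc: "image_mset ((+) 1) (image_mset ((+) n) G) = image_mset ((+) (Suc n)) (G::nat multiset)"
  by (induction G) auto

lemma X_pow_spm: "spm {#1#} ^ n * spm G = spm (image_mset ((+) n) G)"
proof (induction n)
  case 0 then show ?case by simp
next
  case (Suc n)
  have "spm {#1#} ^ Suc n * spm G = spm {#1#} * (spm {#1#} ^ n * spm G)" by (simp add: mult.assoc)
  also have "\<dots> = spm {#1#} * spm (image_mset ((+) n) G)" using Suc by simp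
  also have "\<dots> = spm (image_mset ((+) (Suc n)) G)" by (simp only: spm_X_mult image_shift_Suc)
  finally show ?case .
qed

lemma prod_good:
  assumes "\<forall>x\<in>#A. \<exists>M. x = spm M \<and> 0 \<in># M"
  shows "\<exists>G. prod_mset A = spm G \<and> 0 \<in># G"
  using assms
proof (induction A)
  case empty then show ?case using spm_one by (intro exI[of _ "{#0#}"]) simp
next
  case (add x A)
  then obtain G where G: "prod_mset A = spm G" "0 \<in># G" by auto
  obtain M where M: "x = spm M" "0 \<in># M" using add.prems by auto
  obtain M0 where M0: "M = add_mset 0 M0" using M(2) by (metis multi_member_split)
  have "prod_mset (add_mset x A) = spm (\<Sum>y\<in>#M. image_mset ((+) y) G)"
    using G M spm_mult by simp
  moreover have "0 \<in># (\<Sum>y\<in>#M. image_mset ((+) y) G)" using M0 G(2) by simp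
  ultimately show ?case by blast
qed

lemma Min_shift: "0 \<in># G \<Longrightarrow> Min_mset (image_mset ((+) n) G) = (n::nat)"
  by (rule Min_eqI) force+

lemma unshift: "image_mset (\<lambda>x. x - n) (image_mset ((+) n) G) = (G::nat multiset)"
  by (induction G) auto

lemma strip:
  assumes A: "\<forall>x\<in>#A. N1_irreducible x"
  obtains n A' G where "A = replicate_mset n (spm {#1#}) + A'"
    "\<forall>x\<in>#A'. N1_irreducible x \<and> x \<noteq> spm {#1#}"
    "prod_mset A' = spm G" "0 \<in># G" "prod_mset A = spm (image_mset ((+) n) G)"
proof -
  define n where "n = count A (spm {#1#})"
  define A' where "A' = filter_mset (\<lambda>x. x \<noteq> spm {#1#}) A"
  have AA: "A = replicate_mset n (spm {#1#}) + A'"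
    unfolding n_def A'_def using multiset_partition[of A "\<lambda>x. x = spm {#1#}"]
    by (simp add: filter_eq_replicate_mset)
  have A': "\<forall>x\<in>#A'. N1_irreducible x \<and> x \<noteq> spm {#1#}" using A unfolding A'_def by auto
  have "\<forall>x\<in>#A'. \<exists>M. x = spm M \<and> 0 \<in># M"
  proof
    fix x assume "x \<in># A'"
    then have "N1_irreducible x" "x \<noteq> spm {#1#}" using A' by auto
    then obtain M where "x = spm M" "0 \<in># M" "2 \<le> size M" by (rule irr_good)
    then show "\<exists>M. x = spm M \<and> 0 \<in># M" by blast
  qed
  then obtain G where G: "prod_mset A' = spm G" "0 \<in># G" using prod_good by blast
  have "prod_mset A = spm {#1#} ^ n * prod_mset A'" using AA by simp
  also have "\<dots> = spm (image_mset ((+) n) G)" using G X_pow_spm by simp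
  finally show ?thesis using that AA A' G by blast
qed

theorem mainTheorem10:
  fixes P :: "nat poly"
  assumes "poly P 1 = 8"
  shows "N1_unique_factorisation P"
  unfolding N1_unique_factorisation_def
proof (intro allI impI)
  fix A B :: "nat poly multiset"
  assume iA: "\<forall>x\<in>#A. N1_irreducible x" and iB: "\<forall>x\<in>#B. N1_irreducible x"
    and pA: "prod_mset A = P" and pB: "prod_mset B = P"
  obtain n A' G where a: "A = replicate_mset n (spm {#1#}) + A'"
    "\<forall>x\<in>#A'. N1_irreducible x \<and> x \<noteq> spm {#1#}"
    "prod_mset A' = spm G" "0 \<in># G" "prod_mset A = spm (image_mset ((+) n) G)"
    using strip[OF iA] by blast
  obtain m B' H where b: "B = replicate_mset m (spm {#1#}) + B'"
    "\<forall>x\<in>#B'. N1_irreducible x \<and> x \<noteq> spm {#1#}"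
    "prod_mset B' = spm H" "0 \<in># H" "prod_mset B = spm (image_mset ((+) m) H)"
    using strip[OF iB] by blast
  have "spm (image_mset ((+) n) G) = spm (image_mset ((+) m) H)"
    using a(5) b(5) pA pB by simp
  then have eq: "image_mset ((+) n) G = image_mset ((+) m) H" by (simp only: spm_inj)
  have nm: "n = m" using Min_shift[OF a(4), of n] Min_shift[OF b(4), of m] eq by simp
  have "image_mset ((+) m) G = image_mset ((+) m) H" using eq nm by simp
  then have "image_mset (\<lambda>x. x - m) (image_mset ((+) m) G) = image_mset (\<lambda>x. x - m) (image_mset ((+) m) H)"
    by (rule arg_cong)
  then have GH: "G = H" by (simp only: unshift)
  have "poly (prod_mset A') 1 = size G" unfolding a(3) by (rule poly_spm1)
  also have "size G = poly (prod_mset A) 1" unfolding a(5) poly_spm1 by simp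
  finally have v8: "poly (prod_mset A') 1 = 8" using pA assms by simp
  have "prod_mset A' = prod_mset B'" using a(3) b(3) GH by simp
  then have "A' = B'" using core[OF a(2) b(2) _ v8] by blast
  then show "A = B" using a(1) b(1) nm by simp
qed

end
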